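(* Let $(V,\varphi,\xi,\eta,g)$, $\mathcal{F}$, $G$, $p_1,\dots,p_4$ and the inner product $\langle\cdot,\cdot\rangle$ be as in the context, and let $W_i=\mathrm{Im}\,p_i$ ($i=1,2,3,4$). Then $\mathcal{F}=W_1\oplus W_2\oplus W_3\oplus W_4$, the subspaces $W_i$ are mutually orthogonal with respect to $\langle\cdot,\cdot\rangle$, and each $W_i$ is invariant under the action of $G$.
   Context: Let $V$ be a real vector space of dimension $2n+1$ with an endomorphism $\varphi$, a vector $\xi$ and a linear form $\eta$ such that $\varphi\xi=0$, $\eta\circ\varphi=0$, $\eta(\xi)=1$, $\varphi^2=\mathrm{id}-\eta\otimes\xi$, and such that $\varphi$ restricted to $\mathbb{D}=\ker\eta$ has eigenvalues $\pm1$ with eigenspaces of equal dimension $n$. Let $g$ be a nondegenerate symmetric bilinear form on $V$ with $g(\varphi X,\varphi Y)=-g(X,Y)+\eta(X)\eta(Y)$; then $\eta(X)=g(X,\xi)$. Write $hX=X-\eta(X)\xi$. Fix a basis $\{e_1,\dots,e_{2n}\}$ of $\mathbb{D}$ and write $Y=Y^ie_i+\eta(Y)\xi$. Let $\mathcal{F}$ be the vector space of all $(0,3)$-tensors of the form $F(X,Y,Z)=Y^ig(\mathcal{A}_{e_i}X,Z)+\eta(Y)g(\mathcal{A}_\xi X,\varphi Z)$, where $\mathcal{A}_{e_i}:V\to V$ and $\mathcal{A}_\xi:V\to\mathbb{D}$ are linear maps satisfying for all $X$, $i,j$: $g(\mathcal{A}_{e_i}X,e_j)=-g(\mathcal{A}_{e_j}X,e_i)$;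 $\mathcal{A}_{\varphi e_i}X=-\varphi(\mathcal{A}_{e_i}X)-g(\mathcal{A}_\xi X,e_i)\xi$ (index extended linearly); $\eta(\mathcal{A}_{e_i}X)=-g(\mathcal{A}_\xi X,\varphi e_i)$; $\eta(\mathcal{A}_\xi X)=0$. The inner product on $\mathcal{F}$ is $\langle F_1,F_2\rangle=g^{aq}g^{br}g^{cs}F_1(f_a,f_b,f_c)F_2(f_q,f_r,f_s)$ for any basis $\{f_1,\dots,f_{2n+1}\}$ of $V$, $(g^{ab})$ the inverse of $(g(f_a,f_b))$. Let $G$ be the group of linear automorphisms $a$ of $V$ with $a\varphi=\varphi a$, $a\xi=\xi$, $\eta\circ a=\eta$, $g(aX,aY)=g(X,Y)$, acting on $\mathcal{F}$ by $(\lambda(a)F)(X,Y,Z)=F(a^{-1}X,a^{-1}Y,a^{-1}Z)$. Define $p_1(F)(X,Y,Z)=F(hX,hY,hZ)$; $p_2(F)(X,Y,Z)=-\eta(Y)F(hX,hZ,\xi)+\eta(Z)F(hX,hY,\xi)$; $p_3(F)(X,Y,Z)=\eta(X)F(\xi,hY,hZ)$; $p_4(F)(X,Y,Z)=\eta(X)\eta(Y)F(\xi,\xi,hZ)-\eta(X)\eta(Z)F(\xi,\xi,hY)$. *)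

theory Defs
  imports "HOL-Analysis.Analysis"
begin

type_synonym 'n tensor3 = "real^'n \<Rightarrow> real^'n \<Rightarrow> real^'n \<Rightarrow> real"

definition structure_ok ::
  "nat \<Rightarrow> (real^'n \<Rightarrow> real^'n) \<Rightarrow> real^'n \<Rightarrow> (real^'n \<Rightarrow> real)
     \<Rightarrow> (real^'n \<Rightarrow> real^'n \<Rightarrow> real) \<Rightarrow> bool" where
  "structure_ok n \<phi> \<xi> \<eta> g \<longleftrightarrow>
     CARD('n) = 2 * n + 1 \<and>
     linear \<phi> \<and> linear \<eta> \<and>
     \<phi> \<xi> = 0 \<and> (\<forall>X. \<eta> (\<phi> X) = 0) \<and> \<eta> \<xi> = 1 \<and>
     (\<forall>X. \<phi> (\<phi> X) = X - \<eta> X *\<^sub>R \<xi>) \<and>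
     dim {X. \<eta> X = 0 \<and> \<phi> X = X} = n \<and>
     dim {X. \<eta> X = 0 \<and> \<phi> X = - X} = n \<and>
     bilinear g \<and> (\<forall>X Y. g X Y = g Y X) \<and>
     (\<forall>X. (\<forall>Y. g X Y = 0) \<longrightarrow> X = 0) \<and>
     (\<forall>X Y. g (\<phi> X) (\<phi> Y) = - g X Y + \<eta> X * \<eta> Y)"

definition hproj :: "real^'n \<Rightarrow> (real^'n \<Rightarrow> real) \<Rightarrow> real^'n \<Rightarrow> real^'n" where
  "hproj \<xi> \<eta> X = X - \<eta> X *\<^sub>R \<xi>"

text \<open>The space \<F>. The family A_{e_i} extended linearly in the index is the map
  u \<mapsto> A u (for u in D = ker eta), so that Y^i A_{e_i} = A (h Y).
  Aksi plays the role of A_xi.\<close>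
definition calF ::
  "(real^'n \<Rightarrow> real^'n) \<Rightarrow> real^'n \<Rightarrow> (real^'n \<Rightarrow> real)
     \<Rightarrow> (real^'n \<Rightarrow> real^'n \<Rightarrow> real) \<Rightarrow> 'n tensor3 set" where
  "calF \<phi> \<xi> \<eta> g =
     {F. \<exists>A Aksi.
        bilinear A \<and> linear Aksi \<and>
        (\<forall>X u w. \<eta> u = 0 \<longrightarrow> \<eta> w = 0 \<longrightarrow> g (A u X) w = - g (A w X) u) \<and>
        (\<forall>X u. \<eta> u = 0 \<longrightarrow>
            A (\<phi> u) X = - \<phi> (A u X) - g (Aksi X) u *\<^sub>R \<xi>) \<and>
        (\<forall>X u. \<eta> u = 0 \<longrightarrow> \<eta> (A u X) = - g (Aksi X) (\<phi> u)) \<and>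
        (\<forall>X. \<eta> (Aksi X) = 0) \<and>
        F = (\<lambda>X Y Z. g (A (hproj \<xi> \<eta> Y) X) Z + \<eta> Y * g (Aksi X) (\<phi> Z))}"

definition gram :: "(real^'n \<Rightarrow> real^'n \<Rightarrow> real) \<Rightarrow> real^'n^'n" where
  "gram g = (\<chi> i j. g (axis i 1) (axis j 1))"

definition tinner :: "(real^'n \<Rightarrow> real^'n \<Rightarrow> real) \<Rightarrow> 'n tensor3 \<Rightarrow> 'n tensor3 \<Rightarrow> real" where
  "tinner g F1 F2 =
     (let gi = matrix_inv (gram g) in
      \<Sum>a\<in>UNIV. \<Sum>q\<in>UNIV. \<Sum>b\<in>UNIV. \<Sum>r\<in>UNIV. \<Sum>c\<in>UNIV. \<Sum>s\<in>UNIV.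
        gi$a$q * gi$b$r * gi$c$s *
        F1 (axis a 1) (axis b 1) (axis c 1) * F2 (axis q 1) (axis r 1) (axis s 1))"

definition grpG ::
  "(real^'n \<Rightarrow> real^'n) \<Rightarrow> real^'n \<Rightarrow> (real^'n \<Rightarrow> real)
     \<Rightarrow> (real^'n \<Rightarrow> real^'n \<Rightarrow> real) \<Rightarrow> (real^'n \<Rightarrow> real^'n) set" where
  "grpG \<phi> \<xi> \<eta> g =
     {a. linear a \<and> bij a \<and> (\<forall>X. a (\<phi> X) = \<phi> (a X)) \<and> a \<xi> = \<xi> \<and>
         (\<forall>X. \<eta> (a X) = \<eta> X) \<and> (\<forall>X Y. g (a X) (a Y) = g X Y)}"

definition gact :: "(real^'n \<Rightarrow> real^'n) \<Rightarrow> 'n tensor3 \<Rightarrow> 'n tensor3" where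
  "gact a F = (\<lambda>X Y Z. F (inv a X) (inv a Y) (inv a Z))"

definition pr :: "nat \<Rightarrow> real^'n \<Rightarrow> (real^'n \<Rightarrow> real) \<Rightarrow> 'n tensor3 \<Rightarrow> 'n tensor3" where
  "pr i \<xi> \<eta> F = (let h = hproj \<xi> \<eta> in
     if i = 1 then (\<lambda>X Y Z. F (h X) (h Y) (h Z))
     else if i = 2 then (\<lambda>X Y Z. - \<eta> Y * F (h X) (h Z) \<xi> + \<eta> Z * F (h X) (h Y) \<xi>)
     else if i = 3 then (\<lambda>X Y Z. \<eta> X * F \<xi> (h Y) (h Z))
     else if i = 4 then (\<lambda>X Y Z. \<eta> X * \<eta> Y * F \<xi> \<xi> (h Z) - \<eta> X * \<eta> Z * F \<xi> \<xi> (h Y))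
     else (\<lambda>X Y Z. 0))"

definition Wsp :: "nat \<Rightarrow> (real^'n \<Rightarrow> real^'n) \<Rightarrow> real^'n \<Rightarrow> (real^'n \<Rightarrow> real)
     \<Rightarrow> (real^'n \<Rightarrow> real^'n \<Rightarrow> real) \<Rightarrow> 'n tensor3 set" where
  "Wsp i \<phi> \<xi> \<eta> g = pr i \<xi> \<eta> ` calF \<phi> \<xi> \<eta> g"

end

theory Submission imports Defs begin

lemma lin_expand:
  fixes f :: "real^'n \<Rightarrow> real"
  assumes "linear f"
  shows "f x = (\<Sum>i\<in>UNIV. x$i * f (axis i 1))"
proof -
  have "f x = f (\<Sum>i\<in>UNIV. x$i *\<^sub>R axis i 1)"
    using basis_expansion[of x] by (simp add: scalar_mult_eq_scaleR)
  also have "\<dots> = (\<Sum>i\<in>UNIV. x$i * f (axis i 1))"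
    using assms by (simp add: linear_sum linear_scale)
  finally show ?thesis .
qed

locale ps =
  fixes \<phi> :: "real^'n \<Rightarrow> real^'n" and \<xi> :: "real^'n" and \<eta> :: "real^'n \<Rightarrow> real"
    and g :: "real^'n \<Rightarrow> real^'n \<Rightarrow> real"
  assumes lphi: "linear \<phi>" and leta: "linear \<eta>" and phixi: "\<phi> \<xi> = 0"
    and etaphi[simp]: "\<And>X. \<eta> (\<phi> X) = 0" and etaxi[simp]: "\<eta> \<xi> = 1"
    and phi2: "\<And>X. \<phi> (\<phi> X) = X - \<eta> X *\<^sub>R \<xi>"
    and bil: "bilinear g" and gsym: "\<And>X Y. g X Y = g Y X"
    and nondeg: "\<And>X. (\<forall>Y. g X Y = 0) \<Longrightarrow> X = 0"
    and compat: "\<And>X Y. g (\<phi> X) (\<phi> Y) = - g X Y + \<eta> X * \<eta> Y"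
begin

lemma phixi'[simp]: "\<phi> \<xi> = 0" by (rule phixi)

lemmas gsimps[simp] = bilinear_ladd[OF bil] bilinear_radd[OF bil] bilinear_lmul[OF bil]
  bilinear_rmul[OF bil] bilinear_lneg[OF bil] bilinear_rneg[OF bil] bilinear_lzero[OF bil]
  bilinear_rzero[OF bil] bilinear_lsub[OF bil] bilinear_rsub[OF bil]

lemmas etasimps[simp] = linear_add[OF leta] linear_scale[OF leta] linear_0[OF leta]
  linear_diff[OF leta] linear_neg[OF leta]
lemmas phisimps[simp] = linear_add[OF lphi] linear_scale[OF lphi] linear_0[OF lphi]
  linear_diff[OF lphi] linear_neg[OF lphi]

lemma g_xi[simp]: "g X \<xi> = \<eta> X"
  using compat[of X \<xi>] by simp

lemma g_xi'[simp]: "g \<xi> X = \<eta> X"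
  using g_xi gsym by metis

lemma skew: "g (\<phi> X) Y = - g X (\<phi> Y)"
proof -
  have "g (\<phi> X) (\<phi> (\<phi> Y)) = - g X (\<phi> Y)" using compat[of X "\<phi> Y"] by simp
  then show ?thesis by (simp add: phi2)
qed

abbreviation h where "h \<equiv> hproj \<xi> \<eta>"

lemma eta_h[simp]: "\<eta> (h X) = 0" by (simp add: hproj_def)
lemma phi_h[simp]: "\<phi> (h X) = \<phi> X" by (simp add: hproj_def)
lemma h_xi[simp]: "h \<xi> = 0" by (simp add: hproj_def)
lemma hh[simp]: "h (h X) = h X" by (simp add: hproj_def)
lemma h_add[simp]: "h (X + Y) = h X + h Y" by (simp add: hproj_def algebra_simps)
lemma h_scale[simp]: "h (c *\<^sub>R X) = c *\<^sub>R h X" by (simp add: hproj_def algebra_simps)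
lemma h_0[simp]: "h 0 = 0" by (simp add: hproj_def)
lemma g_h[simp]: "g W (h Z) = g W Z - \<eta> Z * \<eta> W" by (simp add: hproj_def)
lemma g_h'[simp]: "g (h Z) W = g Z W - \<eta> Z * \<eta> W" by (simp add: hproj_def)
lemma lin_h: "linear h" by (rule linearI) simp_all


definition okA :: "(real^'n \<Rightarrow> real^'n \<Rightarrow> real^'n) \<Rightarrow> (real^'n \<Rightarrow> real^'n) \<Rightarrow> bool" where
  "okA A Aksi \<longleftrightarrow> bilinear A \<and> linear Aksi \<and>
        (\<forall>X u w. \<eta> u = 0 \<longrightarrow> \<eta> w = 0 \<longrightarrow> g (A u X) w = - g (A w X) u) \<and>
        (\<forall>X u. \<eta> u = 0 \<longrightarrow>
            A (\<phi> u) X = - \<phi> (A u X) - g (Aksi X) u *\<^sub>R \<xi>) \<and>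
        (\<forall>X u. \<eta> u = 0 \<longrightarrow> \<eta> (A u X) = - g (Aksi X) (\<phi> u)) \<and>
        (\<forall>X. \<eta> (Aksi X) = 0)"

definition tens where
  "tens A Aksi = (\<lambda>X Y Z. g (A (h Y) X) Z + \<eta> Y * g (Aksi X) (\<phi> Z))"

lemma calF_iff: "F \<in> calF \<phi> \<xi> \<eta> g \<longleftrightarrow> (\<exists>A Aksi. okA A Aksi \<and> F = tens A Aksi)"
  unfolding calF_def okA_def tens_def by blast

lemma P_in:
  assumes G: "G \<in> calF \<phi> \<xi> \<eta> g" and lT: "linear T"
  shows "(\<lambda>X Y Z. G (T X) (h Y) (h Z)) \<in> calF \<phi> \<xi> \<eta> g"
proof -
  obtain A Aksi where ok: "okA A Aksi" and GA: "G = tens A Aksi" using G calF_iff by blast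
  have bA: "bilinear A" and lK: "linear Aksi"
    and sk: "\<And>X u w. \<eta> u = 0 \<Longrightarrow> \<eta> w = 0 \<Longrightarrow> g (A u X) w = - g (A w X) u"
    and ph: "\<And>X u. \<eta> u = 0 \<Longrightarrow> A (\<phi> u) X = - \<phi> (A u X) - g (Aksi X) u *\<^sub>R \<xi>"
    and et: "\<And>X u. \<eta> u = 0 \<Longrightarrow> \<eta> (A u X) = - g (Aksi X) (\<phi> u)"
    and ek: "\<And>X. \<eta> (Aksi X) = 0"
    using ok unfolding okA_def by blast+
  note As[simp] = bilinear_ladd[OF bA] bilinear_radd[OF bA] bilinear_lmul[OF bA]
  bilinear_rmul[OF bA] bilinear_lzero[OF bA] bilinear_rzero[OF bA]
  note Ts[simp] = linear_add[OF lT] linear_scale[OF lT] linear_add[OF lK] linear_scale[OF lK]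
  define A' where "A' = (\<lambda>u X. A u (T X) + g (Aksi (T X)) (\<phi> u) *\<^sub>R \<xi>)"
  have "okA A' (\<lambda>X. 0)"
    unfolding okA_def
  proof (intro conjI allI impI)
    show "bilinear A'" unfolding bilinear_def A'_def
      by (auto intro!: linearI simp: algebra_simps)
    show "linear (\<lambda>X::real^'n. 0::real^'n)" by (rule linearI) simp_all
  next
    fix X u w :: "real^'n" assume "\<eta> u = 0" "\<eta> w = 0"
    then show "g (A' u X) w = - g (A' w X) u" using sk[of u w "T X"] by (simp add: A'_def)
  next
    fix X u :: "real^'n" assume u: "\<eta> u = 0"
    show "A' (\<phi> u) X = - \<phi> (A' u X) - g 0 u *\<^sub>R \<xi>"
      using u by (simp add: A'_def ph phi2)
    show "\<eta> (A' u X) = - g 0 (\<phi> u)"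
      using u by (simp add: A'_def et)
  qed simp
  moreover have "(\<lambda>X Y Z. G (T X) (h Y) (h Z)) = tens A' (\<lambda>X. 0)"
  proof (intro ext)
    fix X Y Z
    have "\<eta> (A (h Y) (T X)) = - g (Aksi (T X)) (\<phi> Y)" using et[of "h Y" "T X"] by simp
    then show "G (T X) (h Y) (h Z) = tens A' (\<lambda>X. 0) X Y Z"
      by (simp add: GA tens_def A'_def)
  qed
  ultimately show ?thesis using calF_iff by blast
qed

lemma Q_in:
  assumes G: "G \<in> calF \<phi> \<xi> \<eta> g" and lT: "linear T"
  shows "(\<lambda>X Y Z. - \<eta> Y * G (T X) (h Z) \<xi> + \<eta> Z * G (T X) (h Y) \<xi>) \<in> calF \<phi> \<xi> \<eta> g"
proof -
  obtain A Aksi where ok: "okA A Aksi" and GA: "G = tens A Aksi" using G calF_iff by blast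
  have bA: "bilinear A" and lK: "linear Aksi"
    and et: "\<And>X u. \<eta> u = 0 \<Longrightarrow> \<eta> (A u X) = - g (Aksi X) (\<phi> u)"
    and ek: "\<And>X. \<eta> (Aksi X) = 0"
    using ok unfolding okA_def by blast+
  note Ts[simp] = linear_add[OF lT] linear_scale[OF lT] linear_add[OF lK] linear_scale[OF lK]
  define A' where "A' = (\<lambda>u X. - g (Aksi (T X)) (\<phi> u) *\<^sub>R \<xi>)"
  have "okA A' (\<lambda>X. Aksi (T X))"
    unfolding okA_def
  proof (intro conjI allI impI)
    show "bilinear A'" unfolding bilinear_def A'_def
      by (auto intro!: linearI simp: algebra_simps)
    show "linear (\<lambda>X. Aksi (T X))" by (rule linearI) simp_all
  next
    fix X u w :: "real^'n" assume "\<eta> u = 0" "\<eta> w = 0"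
    then show "g (A' u X) w = - g (A' w X) u" by (simp add: A'_def)
  next
    fix X u :: "real^'n" assume u: "\<eta> u = 0"
    show "A' (\<phi> u) X = - \<phi> (A' u X) - g (Aksi (T X)) u *\<^sub>R \<xi>"
      using u by (simp add: A'_def phi2)
    show "\<eta> (A' u X) = - g (Aksi (T X)) (\<phi> u)"
      using u by (simp add: A'_def)
  qed (simp add: ek)
  moreover have "(\<lambda>X Y Z. - \<eta> Y * G (T X) (h Z) \<xi> + \<eta> Z * G (T X) (h Y) \<xi>) = tens A' (\<lambda>X. Aksi (T X))"
  proof (intro ext)
    fix X Y Z
    have "\<eta> (A (h Y) (T X)) = - g (Aksi (T X)) (\<phi> Y)" using et[of "h Y" "T X"] by simp
    moreover have "\<eta> (A (h Z) (T X)) = - g (Aksi (T X)) (\<phi> Z)" using et[of "h Z" "T X"] by simp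
    ultimately show "- \<eta> Y * G (T X) (h Z) \<xi> + \<eta> Z * G (T X) (h Y) \<xi> = tens A' (\<lambda>X. Aksi (T X)) X Y Z"
      by (simp add: GA tens_def A'_def algebra_simps)
  qed
  ultimately show ?thesis using calF_iff by blast
qed


definition tri :: "'n tensor3 \<Rightarrow> bool" where
  "tri F \<longleftrightarrow> (\<forall>X X' Y Z. F (X + X') Y Z = F X Y Z + F X' Y Z) \<and>
     (\<forall>c X Y Z. F (c *\<^sub>R X) Y Z = c * F X Y Z) \<and>
     (\<forall>X Y Y' Z. F X (Y + Y') Z = F X Y Z + F X Y' Z) \<and>
     (\<forall>c X Y Z. F X (c *\<^sub>R Y) Z = c * F X Y Z) \<and>
     (\<forall>X Y Z Z'. F X Y (Z + Z') = F X Y Z + F X Y Z') \<and>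
     (\<forall>c X Y Z. F X Y (c *\<^sub>R Z) = c * F X Y Z)"

lemma tri_zero:
  assumes "tri F"
  shows "F 0 Y Z = 0" "F X 0 Z = 0" "F X Y 0 = 0"
  using assms unfolding tri_def by (metis mult_zero_left scale_zero_left)+

lemma calF_tri: assumes "F \<in> calF \<phi> \<xi> \<eta> g" shows "tri F"
proof -
  obtain A Aksi where ok: "okA A Aksi" and GA: "F = tens A Aksi" using assms calF_iff by blast
  have bA: "bilinear A" and lK: "linear Aksi" using ok unfolding okA_def by blast+
  note As[simp] = bilinear_ladd[OF bA] bilinear_radd[OF bA] bilinear_lmul[OF bA]
  bilinear_rmul[OF bA] bilinear_lzero[OF bA] bilinear_rzero[OF bA]
  note Ts[simp] = linear_add[OF lK] linear_scale[OF lK]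
  show ?thesis unfolding tri_def GA tens_def by (simp add: algebra_simps)
qed

lemma calF_xi: assumes "F \<in> calF \<phi> \<xi> \<eta> g"
  shows "F X (h Z) \<xi> = - F X \<xi> (h Z)" "F X \<xi> \<xi> = 0"
proof -
  obtain A Aksi where ok: "okA A Aksi" and GA: "F = tens A Aksi" using assms calF_iff by blast
  have bA: "bilinear A" and et: "\<And>X u. \<eta> u = 0 \<Longrightarrow> \<eta> (A u X) = - g (Aksi X) (\<phi> u)"
    using ok unfolding okA_def by blast+
  note As[simp] = bilinear_lzero[OF bA]
  show "F X (h Z) \<xi> = - F X \<xi> (h Z)" using et[of "h Z" X] by (simp add: GA tens_def)
  show "F X \<xi> \<xi> = 0" by (simp add: GA tens_def)
qed

lemma pr1: "pr 1 \<xi> \<eta> F = (\<lambda>X Y Z. F (h X) (h Y) (h Z))" by (simp add: pr_def Let_def)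
lemma pr1': "pr (Suc 0) \<xi> \<eta> F = (\<lambda>X Y Z. F (h X) (h Y) (h Z))" using pr1 by simp
lemma pr2: "pr 2 \<xi> \<eta> F = (\<lambda>X Y Z. - \<eta> Y * F (h X) (h Z) \<xi> + \<eta> Z * F (h X) (h Y) \<xi>)"
  by (simp add: pr_def Let_def)
lemma pr3: "pr 3 \<xi> \<eta> F = (\<lambda>X Y Z. \<eta> X * F \<xi> (h Y) (h Z))" by (simp add: pr_def Let_def)
lemma pr4: "pr 4 \<xi> \<eta> F = (\<lambda>X Y Z. \<eta> X * \<eta> Y * F \<xi> \<xi> (h Z) - \<eta> X * \<eta> Z * F \<xi> \<xi> (h Y))"
  by (simp add: pr_def Let_def)
lemmas prs = pr1 pr1' pr2 pr3 pr4

lemma i4: "i \<in> {1..4::nat} \<Longrightarrow> i = 1 \<or> i = 2 \<or> i = 3 \<or> i = 4" by auto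

lemma pr_tri: assumes "tri F" "i \<in> {1..4}" shows "tri (pr i \<xi> \<eta> F)"
  using i4[OF assms(2)] assms(1) unfolding tri_def
  by (elim disjE) (simp_all add: prs algebra_simps)

lemma pr_in: assumes "F \<in> calF \<phi> \<xi> \<eta> g" "i \<in> {1..4}" shows "pr i \<xi> \<eta> F \<in> calF \<phi> \<xi> \<eta> g"
proof -
  have t: "tri F" using calF_tri assms(1) .
  have lT: "linear (\<lambda>X. \<eta> X *\<^sub>R \<xi>)" by (rule linearI) (simp_all add: algebra_simps)
  have "i = 1 \<or> i = 2 \<or> i = 3 \<or> i = 4" using i4 assms(2) .
  then show ?thesis
  proof (elim disjE)
    assume "i = 1" then show ?thesis using P_in[OF assms(1) lin_h] by (simp add: pr1 pr1')
  next
    assume "i = 2" then show ?thesis using Q_in[OF assms(1) lin_h] by (simp add: pr2)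
  next
    assume "i = 3"
    have "pr 3 \<xi> \<eta> F = (\<lambda>X Y Z. F (\<eta> X *\<^sub>R \<xi>) (h Y) (h Z))"
      using t unfolding tri_def by (simp add: pr3)
    then show ?thesis using P_in[OF assms(1) lT] \<open>i = 3\<close> by simp
  next
    assume "i = 4"
    have "pr 4 \<xi> \<eta> F = (\<lambda>X Y Z. - \<eta> Y * F (\<eta> X *\<^sub>R \<xi>) (h Z) \<xi> + \<eta> Z * F (\<eta> X *\<^sub>R \<xi>) (h Y) \<xi>)"
      using t calF_xi[OF assms(1)] unfolding tri_def by (simp add: pr4 algebra_simps)
    then show ?thesis using Q_in[OF assms(1) lT] \<open>i = 4\<close> by simp
  qed
qed

lemma pp: assumes "tri F" "i \<in> {1..4}" "j \<in> {1..4}"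
  shows "pr j \<xi> \<eta> (pr i \<xi> \<eta> F) = (if i = j then pr i \<xi> \<eta> F else (\<lambda>X Y Z. 0))"
proof -
  note z[simp] = tri_zero[OF assms(1)]
  show ?thesis using i4[OF assms(2)] i4[OF assms(3)]
    by (elim disjE) (simp_all add: prs)
qed

lemma pr_add: "pr j \<xi> \<eta> (\<lambda>X Y Z. F1 X Y Z + F2 X Y Z) = (\<lambda>X Y Z. pr j \<xi> \<eta> F1 X Y Z + pr j \<xi> \<eta> F2 X Y Z)"
  by (simp add: pr_def Let_def algebra_simps)

lemma decomp: assumes "F \<in> calF \<phi> \<xi> \<eta> g"
  shows "F = (\<lambda>X Y Z. pr 1 \<xi> \<eta> F X Y Z + pr 2 \<xi> \<eta> F X Y Z + pr 3 \<xi> \<eta> F X Y Z + pr 4 \<xi> \<eta> F X Y Z)"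
proof (intro ext)
  fix X Y Z
  have t: "tri F" using calF_tri assms(1) .
  note x = calF_xi[OF assms]
  have "F X Y Z = F (h X + \<eta> X *\<^sub>R \<xi>) (h Y + \<eta> Y *\<^sub>R \<xi>) (h Z + \<eta> Z *\<^sub>R \<xi>)"
    by (simp add: hproj_def)
  also have "\<dots> = pr 1 \<xi> \<eta> F X Y Z + pr 2 \<xi> \<eta> F X Y Z + pr 3 \<xi> \<eta> F X Y Z + pr 4 \<xi> \<eta> F X Y Z"
    using t x unfolding tri_def by (simp add: prs algebra_simps)
  finally show "F X Y Z = \<dots>" .
qed


lemma grp_facts:
  assumes "a \<in> grpG \<phi> \<xi> \<eta> g"
  shows "linear a" "\<And>X. a (inv a X) = X" "\<And>X. inv a (a X) = X" "linear (inv a)"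
    "\<And>X. inv a (\<phi> X) = \<phi> (inv a X)" "\<And>X. a (\<phi> X) = \<phi> (a X)"
    "\<And>X. \<eta> (inv a X) = \<eta> X" "\<And>X. \<eta> (a X) = \<eta> X" "inv a \<xi> = \<xi>" "a \<xi> = \<xi>"
    "\<And>V W. g (a V) W = g V (inv a W)" "\<And>X. h (inv a X) = inv a (h X)"
proof -
  have la: "linear a" and bj: "bij a" and com: "\<And>X. a (\<phi> X) = \<phi> (a X)" and ax: "a \<xi> = \<xi>"
    and ea: "\<And>X. \<eta> (a X) = \<eta> X" and ga: "\<And>X Y. g (a X) (a Y) = g X Y"
    using assms unfolding grpG_def by blast+
  show ab: "\<And>X. a (inv a X) = X" using bj by (simp add: bij_is_surj surj_f_inv_f)
  show ba: "\<And>X. inv a (a X) = X" using bj by (simp add: bij_is_inj)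
  have ij: "inj a" using bj bij_is_inj by blast
  show "linear a" by (rule la)
  show "linear (inv a)"
  proof (rule linearI)
    fix x y show "inv a (x + y) = inv a x + inv a y"
      using ab ij by (metis la linear_add injD)
    fix r x show "inv a (r *\<^sub>R x) = r *\<^sub>R inv a x"
      using ab ij by (metis la linear_scale injD)
  qed
  show bp: "\<And>X. inv a (\<phi> X) = \<phi> (inv a X)" by (metis ab ba com)
  show "\<And>X. a (\<phi> X) = \<phi> (a X)" by (rule com)
  show eb: "\<And>X. \<eta> (inv a X) = \<eta> X" by (metis ab ea)
  show "\<And>X. \<eta> (a X) = \<eta> X" by (rule ea)
  show bx: "inv a \<xi> = \<xi>" by (metis ax ba)
  show "a \<xi> = \<xi>" by (rule ax)
  show "\<And>V W. g (a V) W = g V (inv a W)" by (metis ab ga)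
  have lb: "linear (inv a)"
  proof (rule linearI)
    fix x y show "inv a (x + y) = inv a x + inv a y"
      using ab ij by (metis la linear_add injD)
    fix r x show "inv a (r *\<^sub>R x) = r *\<^sub>R inv a x"
      using ab ij by (metis la linear_scale injD)
  qed
  show "\<And>X. h (inv a X) = inv a (h X)"
    by (simp add: hproj_def eb bx linear_diff[OF lb] linear_scale[OF lb])
qed

lemma gact_pr: assumes "a \<in> grpG \<phi> \<xi> \<eta> g" "i \<in> {1..4}"
  shows "gact a (pr i \<xi> \<eta> F) = pr i \<xi> \<eta> (gact a F)"
proof -
  note f = grp_facts[OF assms(1)]
  show ?thesis using i4[OF assms(2)]
    by (elim disjE) (simp_all add: prs gact_def f)
qed

lemma gact_calF: assumes "a \<in> grpG \<phi> \<xi> \<eta> g" "G \<in> calF \<phi> \<xi> \<eta> g"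
  shows "gact a G \<in> calF \<phi> \<xi> \<eta> g"
proof -
  note f = grp_facts[OF assms(1)]
  obtain A Aksi where ok: "okA A Aksi" and GA: "G = tens A Aksi" using assms(2) calF_iff by blast
  have bA: "bilinear A" and lK: "linear Aksi"
    and sk: "\<And>X u w. \<eta> u = 0 \<Longrightarrow> \<eta> w = 0 \<Longrightarrow> g (A u X) w = - g (A w X) u"
    and ph: "\<And>X u. \<eta> u = 0 \<Longrightarrow> A (\<phi> u) X = - \<phi> (A u X) - g (Aksi X) u *\<^sub>R \<xi>"
    and et: "\<And>X u. \<eta> u = 0 \<Longrightarrow> \<eta> (A u X) = - g (Aksi X) (\<phi> u)"
    and ek: "\<And>X. \<eta> (Aksi X) = 0"
    using ok unfolding okA_def by blast+
  note As[simp] = bilinear_ladd[OF bA] bilinear_radd[OF bA] bilinear_lmul[OF bA]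
  bilinear_rmul[OF bA] bilinear_lzero[OF bA] bilinear_rzero[OF bA]
  note Ls[simp] = linear_add[OF lK] linear_scale[OF lK] linear_add[OF f(1)] linear_scale[OF f(1)]
    linear_add[OF f(4)] linear_scale[OF f(4)] linear_diff[OF f(1)] linear_neg[OF f(1)]
  note Fs[simp] = f(2,3,5,7,8,9,10,12)
  define b where "b = inv a"
  define A' where "A' = (\<lambda>u X. a (A (inv a u) (inv a X)))"
  define K' where "K' = (\<lambda>X. a (Aksi (inv a X)))"
  have "okA A' K'"
    unfolding okA_def
  proof (intro conjI allI impI)
    show "bilinear A'" unfolding bilinear_def A'_def
      by (auto intro!: linearI simp: algebra_simps)
    show "linear K'" unfolding K'_def by (rule linearI) simp_all
  next
    fix X u w :: "real^'n" assume "\<eta> u = 0" "\<eta> w = 0"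
    then show "g (A' u X) w = - g (A' w X) u"
      using sk[of "inv a u" "inv a w" "inv a X"] by (simp add: A'_def f(11))
  next
    fix X u :: "real^'n" assume u: "\<eta> u = 0"
    show "A' (\<phi> u) X = - \<phi> (A' u X) - g (K' X) u *\<^sub>R \<xi>"
      using u ph[of "inv a u" "inv a X"] by (simp add: A'_def K'_def f(6,11))
    show "\<eta> (A' u X) = - g (K' X) (\<phi> u)"
      using u et[of "inv a u" "inv a X"] by (simp add: A'_def K'_def f(11))
  next
    fix X show "\<eta> (K' X) = 0" by (simp add: K'_def ek)
  qed
  moreover have "gact a G = tens A' K'"
  proof (intro ext)
    fix X Y Z
    show "gact a G X Y Z = tens A' K' X Y Z"
      by (simp add: gact_def GA tens_def A'_def K'_def f(11) f(6)[symmetric])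
  qed
  ultimately show ?thesis using calF_iff by blast
qed


abbreviation e :: "'n \<Rightarrow> real^'n" where "e i \<equiv> axis i 1"
definition gi where "gi = matrix_inv (gram g)"

lemma lin_g1: "linear (g X)" using bil unfolding bilinear_def by blast
lemma lin_g2: "linear (\<lambda>X. g X Y)" using bil unfolding bilinear_def by blast

lemma gram_mv: "(gram g *v x) $ i = g (e i) x"
proof -
  have "g (e i) x = (\<Sum>j\<in>UNIV. x$j * g (e i) (e j))" by (rule lin_expand[OF lin_g1])
  then show ?thesis by (simp add: matrix_vector_mult_def gram_def mult.commute)
qed

lemma gram_inv: "invertible (gram g)"
  unfolding invertible_left_inverse matrix_left_invertible_ker
proof (intro allI impI)
  fix x assume "gram g *v x = 0"
  then have z: "\<And>i. g (e i) x = 0" by (metis gram_mv zero_index)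
  have "\<forall>Y. g x Y = 0"
  proof
    fix Y have "g Y x = (\<Sum>i\<in>UNIV. Y$i * g (e i) x)" by (rule lin_expand[OF lin_g2])
    then show "g x Y = 0" using z gsym by simp
  qed
  then show "x = 0" by (rule nondeg)
qed

lemma gi_props: "gram g ** gi = mat 1" "gi ** gram g = mat 1"
proof -
  have "\<exists>A'. gram g ** A' = mat 1 \<and> A' ** gram g = mat 1" using gram_inv invertible_def by blast
  then have "gram g ** gi = mat 1 \<and> gi ** gram g = mat 1"
    unfolding gi_def matrix_inv_def by (rule someI_ex)
  then show "gram g ** gi = mat 1" "gi ** gram g = mat 1" by auto
qed

lemma gram_sym: "transpose (gram g) = gram g"
  by (simp add: transpose_def gram_def vec_eq_iff gsym)

lemma gi_sym: "gi $ a $ q = gi $ q $ a"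
proof -
  have "transpose gi ** gram g = mat 1"
    by (metis gi_props(1) gram_sym matrix_transpose_mul transpose_mat)
  then have "transpose gi = gi"
    by (metis gi_props(1) matrix_mul_assoc matrix_mul_lid matrix_mul_rid)
  then have "transpose gi $ q $ a = gi $ q $ a" by simp
  then show ?thesis unfolding transpose_def by simp
qed

lemma contr: "(\<Sum>q\<in>UNIV. gi$a$q * \<eta> (e q)) = \<xi>$a"
proof -
  have "\<And>q. \<eta> (e q) = (gram g *v \<xi>)$q" by (simp add: gram_mv)
  then have "(\<Sum>q\<in>UNIV. gi$a$q * \<eta> (e q)) = (gi *v (gram g *v \<xi>))$a"
    by (simp add: matrix_vector_mult_def)
  also have "\<dots> = \<xi>$a" by (simp add: matrix_vector_mul_assoc gi_props)
  finally show ?thesis .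
qed

lemma key: assumes "linear f"
  shows "(\<Sum>a\<in>UNIV. \<Sum>q\<in>UNIV. gi$a$q * (\<eta> (e q) * f (e a))) = f \<xi>"
proof -
  have "(\<Sum>a\<in>UNIV. \<Sum>q\<in>UNIV. gi$a$q * (\<eta> (e q) * f (e a)))
      = (\<Sum>a\<in>UNIV. (\<Sum>q\<in>UNIV. gi$a$q * \<eta> (e q)) * f (e a))"
    by (simp add: sum_distrib_right mult.assoc)
  also have "\<dots> = (\<Sum>a\<in>UNIV. \<xi>$a * f (e a))" by (simp add: contr)
  also have "\<dots> = f \<xi>" by (rule lin_expand[OF assms, of \<xi>, symmetric])
  finally show ?thesis .
qed

lemma swap6:
  "(\<Sum>a\<in>UNIV. \<Sum>q\<in>UNIV. \<Sum>b\<in>UNIV. \<Sum>r\<in>UNIV. \<Sum>c\<in>UNIV. \<Sum>s\<in>UNIV. f a q b r c s) =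
   (\<Sum>q\<in>UNIV. \<Sum>a\<in>UNIV. \<Sum>r\<in>UNIV. \<Sum>b\<in>UNIV. \<Sum>s\<in>UNIV. \<Sum>c\<in>UNIV. (f a q b r c s :: real))"
  apply (rule trans[OF sum.swap])
  apply (rule sum.cong[OF refl])+
  apply (rule trans[OF sum.swap])
  apply (rule sum.cong[OF refl])+
  apply (rule sum.swap)
  done

lemma tinner_sym: "tinner g F1 F2 = tinner g F2 F1"
  unfolding tinner_def Let_def gi_def[symmetric]
  apply (subst swap6)
  apply (rule sum.cong[OF refl])+
  apply (simp add: gi_sym mult_ac)
  done


lemma CX:
  assumes t: "tri F1" and z: "\<And>Y Z. F1 \<xi> Y Z = 0" and f2: "\<And>X Y Z. F2 X Y Z = \<eta> X * K Y Z"
  shows "tinner g F1 F2 = 0"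
proof -
  define \<Psi> where "\<Psi> X = (\<Sum>b\<in>UNIV. \<Sum>r\<in>UNIV. \<Sum>c\<in>UNIV. \<Sum>s\<in>UNIV.
      gi$b$r * gi$c$s * F1 X (e b) (e c) * K (e r) (e s))" for X
  have lin: "linear \<Psi>"
    using t unfolding tri_def
    by (intro linearI) (simp_all add: \<Psi>_def algebra_simps sum.distrib sum_distrib_left)
  have "tinner g F1 F2 = (\<Sum>a\<in>UNIV. \<Sum>q\<in>UNIV. gi$a$q * (\<eta> (e q) * \<Psi> (e a)))"
    by (simp add: tinner_def Let_def gi_def[symmetric] \<Psi>_def f2 sum_distrib_left mult_ac)
  also have "\<dots> = \<Psi> \<xi>" by (rule key[OF lin])
  also have "\<dots> = 0" by (simp add: \<Psi>_def z)
  finally show ?thesis .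
qed

lemma CYZ:
  assumes t: "tri F1" and z1: "\<And>X Z. F1 X \<xi> Z = 0" and z2: "\<And>X Y. F1 X Y \<xi> = 0"
    and f2: "\<And>X Y Z. F2 X Y Z = \<eta> Y * Ka X Z + \<eta> Z * Kb X Y"
  shows "tinner g F1 F2 = 0"
proof -
  define \<Psi>1 where "\<Psi>1 a q Y = (\<Sum>c\<in>UNIV. \<Sum>s\<in>UNIV.
      gi$a$q * gi$c$s * F1 (e a) Y (e c) * Ka (e q) (e s))" for a q Y
  define \<Psi>2 where "\<Psi>2 a q b r Z = gi$a$q * gi$b$r * F1 (e a) (e b) Z * Kb (e q) (e r)" for a q b r Z
  have lin1: "linear (\<Psi>1 a q)" for a q
    using t unfolding tri_def
    by (intro linearI) (simp_all add: \<Psi>1_def algebra_simps sum.distrib sum_distrib_left)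
  have lin2: "linear (\<Psi>2 a q b r)" for a q b r
    using t unfolding tri_def
    by (intro linearI) (simp_all add: \<Psi>2_def algebra_simps)
  have "tinner g F1 F2 = (\<Sum>a\<in>UNIV. \<Sum>q\<in>UNIV. \<Sum>b\<in>UNIV. \<Sum>r\<in>UNIV. gi$b$r * (\<eta> (e r) * \<Psi>1 a q (e b)))
     + (\<Sum>a\<in>UNIV. \<Sum>q\<in>UNIV. \<Sum>b\<in>UNIV. \<Sum>r\<in>UNIV. \<Sum>c\<in>UNIV. \<Sum>s\<in>UNIV. gi$c$s * (\<eta> (e s) * \<Psi>2 a q b r (e c)))"
    by (simp add: tinner_def Let_def gi_def[symmetric] \<Psi>1_def \<Psi>2_def f2 sum_distrib_left
        distrib_left sum.distrib mult_ac)
  also have "\<dots> = 0"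
    by (simp only: key[OF lin1] key[OF lin2]) (simp add: \<Psi>1_def \<Psi>2_def z1 z2)
  finally show ?thesis .
qed


lemma orth_lt:
  assumes t: "tri G" and t': "tri G'" and ij: "i \<in> {1..4}" "j \<in> {1..4}" "i < j"
  shows "tinner g (pr i \<xi> \<eta> G) (pr j \<xi> \<eta> G') = 0"
proof -
  note z[simp] = tri_zero[OF t] tri_zero[OF t']
  have T: "tri (pr k \<xi> \<eta> G)" if "k \<in> {1..4}" for k using pr_tri[OF t that] .
  have T1: "tri (pr 1 \<xi> \<eta> G)" "tri (pr 2 \<xi> \<eta> G)" "tri (pr 3 \<xi> \<eta> G)" by (auto intro: T)
  have c12: "tinner g (pr 1 \<xi> \<eta> G) (pr 2 \<xi> \<eta> G') = 0"
    by (rule CYZ[OF T1(1), where Ka = "\<lambda>X Z. - G' (h X) (h Z) \<xi>" and Kb = "\<lambda>X Y. G' (h X) (h Y) \<xi>"])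
      (simp_all add: prs)
  have c13: "tinner g (pr 1 \<xi> \<eta> G) (pr 3 \<xi> \<eta> G') = 0"
    by (rule CX[OF T1(1), where K = "\<lambda>Y Z. G' \<xi> (h Y) (h Z)"]) (simp_all add: prs)
  have c14: "tinner g (pr 1 \<xi> \<eta> G) (pr 4 \<xi> \<eta> G') = 0"
    by (rule CX[OF T1(1), where K = "\<lambda>Y Z. \<eta> Y * G' \<xi> \<xi> (h Z) - \<eta> Z * G' \<xi> \<xi> (h Y)"])
      (simp_all add: prs algebra_simps)
  have c23: "tinner g (pr 2 \<xi> \<eta> G) (pr 3 \<xi> \<eta> G') = 0"
    by (rule CX[OF T1(2), where K = "\<lambda>Y Z. G' \<xi> (h Y) (h Z)"]) (simp_all add: prs)
  have c24: "tinner g (pr 2 \<xi> \<eta> G) (pr 4 \<xi> \<eta> G') = 0"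
    by (rule CX[OF T1(2), where K = "\<lambda>Y Z. \<eta> Y * G' \<xi> \<xi> (h Z) - \<eta> Z * G' \<xi> \<xi> (h Y)"])
      (simp_all add: prs algebra_simps)
  have c34: "tinner g (pr 3 \<xi> \<eta> G) (pr 4 \<xi> \<eta> G') = 0"
    by (rule CYZ[OF T1(3), where Ka = "\<lambda>X Z. \<eta> X * G' \<xi> \<xi> (h Z)" and Kb = "\<lambda>X Y. - \<eta> X * G' \<xi> \<xi> (h Y)"])
      (simp_all add: prs algebra_simps)
  show ?thesis using i4[OF ij(1)] i4[OF ij(2)] ij(3) c12 c13 c14 c23 c24 c34 by auto
qed

lemma orth:
  assumes F: "F \<in> Wsp i \<phi> \<xi> \<eta> g" and F': "F' \<in> Wsp j \<phi> \<xi> \<eta> g"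
    and ij: "i \<in> {1..4}" "j \<in> {1..4}" "i \<noteq> j"
  shows "tinner g F F' = 0"
proof -
  obtain G where G: "G \<in> calF \<phi> \<xi> \<eta> g" "F = pr i \<xi> \<eta> G" using F unfolding Wsp_def by blast
  obtain G' where G': "G' \<in> calF \<phi> \<xi> \<eta> g" "F' = pr j \<xi> \<eta> G'" using F' unfolding Wsp_def by blast
  have t: "tri G" "tri G'" using G(1) G'(1) calF_tri by blast+
  show ?thesis
  proof (cases "i < j")
    case True then show ?thesis using orth_lt[OF t ij(1,2)] G G' by simp
  next
    case False then have "j < i" using ij(3) by simp
    then show ?thesis using orth_lt[OF t(2,1) ij(2,1)] G G' tinner_sym by metis
  qed
qed


lemma uniq:
  assumes W: "F1 \<in> Wsp 1 \<phi> \<xi> \<eta> g" "F2 \<in> Wsp 2 \<phi> \<xi> \<eta> g" "F3 \<in> Wsp 3 \<phi> \<xi> \<eta> g" "F4 \<in> Wsp 4 \<phi> \<xi> \<eta> g"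
    and F: "F = (\<lambda>X Y Z. F1 X Y Z + F2 X Y Z + F3 X Y Z + F4 X Y Z)"
  shows "F1 = pr 1 \<xi> \<eta> F \<and> F2 = pr 2 \<xi> \<eta> F \<and> F3 = pr 3 \<xi> \<eta> F \<and> F4 = pr 4 \<xi> \<eta> F"
proof -
  obtain G1 where G1: "G1 \<in> calF \<phi> \<xi> \<eta> g" "F1 = pr 1 \<xi> \<eta> G1" using W(1) unfolding Wsp_def by blast
  obtain G2 where G2: "G2 \<in> calF \<phi> \<xi> \<eta> g" "F2 = pr 2 \<xi> \<eta> G2" using W(2) unfolding Wsp_def by blast
  obtain G3 where G3: "G3 \<in> calF \<phi> \<xi> \<eta> g" "F3 = pr 3 \<xi> \<eta> G3" using W(3) unfolding Wsp_def by blast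
  obtain G4 where G4: "G4 \<in> calF \<phi> \<xi> \<eta> g" "F4 = pr 4 \<xi> \<eta> G4" using W(4) unfolding Wsp_def by blast
  have t: "tri G1" "tri G2" "tri G3" "tri G4" using G1 G2 G3 G4 calF_tri by blast+
  have P: "pr j \<xi> \<eta> F = (\<lambda>X Y Z. pr j \<xi> \<eta> (pr 1 \<xi> \<eta> G1) X Y Z + pr j \<xi> \<eta> (pr 2 \<xi> \<eta> G2) X Y Z
      + pr j \<xi> \<eta> (pr 3 \<xi> \<eta> G3) X Y Z + pr j \<xi> \<eta> (pr 4 \<xi> \<eta> G4) X Y Z)" for j
    unfolding F G1(2) G2(2) G3(2) G4(2) by (simp add: pr_add)
  show ?thesis
    unfolding P G1(2) G2(2) G3(2) G4(2)
    by (simp add: pp[OF t(1)] pp[OF t(2)] pp[OF t(3)] pp[OF t(4)])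
qed

end

theorem proposition2p1:
  fixes n :: nat and \<phi> :: "real^'n \<Rightarrow> real^'n" and \<xi> :: "real^'n"
    and \<eta> :: "real^'n \<Rightarrow> real" and g :: "real^'n \<Rightarrow> real^'n \<Rightarrow> real"
  assumes "structure_ok n \<phi> \<xi> \<eta> g"
  shows "(\<forall>i\<in>{1..4}. Wsp i \<phi> \<xi> \<eta> g \<subseteq> calF \<phi> \<xi> \<eta> g)
    \<and> (\<forall>F\<in>calF \<phi> \<xi> \<eta> g. \<exists>!(F1, F2, F3, F4).
          F1 \<in> Wsp 1 \<phi> \<xi> \<eta> g \<and> F2 \<in> Wsp 2 \<phi> \<xi> \<eta> g \<and>
          F3 \<in> Wsp 3 \<phi> \<xi> \<eta> g \<and> F4 \<in> Wsp 4 \<phi> \<xi> \<eta> g \<and>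
          F = (\<lambda>X Y Z. F1 X Y Z + F2 X Y Z + F3 X Y Z + F4 X Y Z))
    \<and> (\<forall>i\<in>{1..4}. \<forall>j\<in>{1..4}. i \<noteq> j \<longrightarrow>
          (\<forall>F\<in>Wsp i \<phi> \<xi> \<eta> g. \<forall>F'\<in>Wsp j \<phi> \<xi> \<eta> g. tinner g F F' = 0))
    \<and> (\<forall>i\<in>{1..4}. \<forall>a\<in>grpG \<phi> \<xi> \<eta> g. \<forall>F\<in>Wsp i \<phi> \<xi> \<eta> g.
          gact a F \<in> Wsp i \<phi> \<xi> \<eta> g)"
proof -
  interpret ps \<phi> \<xi> \<eta> g
    apply (rule ps.intro)
    using assms unfolding structure_ok_def by blast+
  have P1: "\<forall>i\<in>{1..4}. Wsp i \<phi> \<xi> \<eta> g \<subseteq> calF \<phi> \<xi> \<eta> g"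
    unfolding Wsp_def using pr_in by blast
  have P2: "\<forall>F\<in>calF \<phi> \<xi> \<eta> g. \<exists>!(F1, F2, F3, F4).
          F1 \<in> Wsp 1 \<phi> \<xi> \<eta> g \<and> F2 \<in> Wsp 2 \<phi> \<xi> \<eta> g \<and>
          F3 \<in> Wsp 3 \<phi> \<xi> \<eta> g \<and> F4 \<in> Wsp 4 \<phi> \<xi> \<eta> g \<and>
          F = (\<lambda>X Y Z. F1 X Y Z + F2 X Y Z + F3 X Y Z + F4 X Y Z)"
  proof
    fix F assume F: "F \<in> calF \<phi> \<xi> \<eta> g"
    show "\<exists>!(F1, F2, F3, F4).
          F1 \<in> Wsp 1 \<phi> \<xi> \<eta> g \<and> F2 \<in> Wsp 2 \<phi> \<xi> \<eta> g \<and>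
          F3 \<in> Wsp 3 \<phi> \<xi> \<eta> g \<and> F4 \<in> Wsp 4 \<phi> \<xi> \<eta> g \<and>
          F = (\<lambda>X Y Z. F1 X Y Z + F2 X Y Z + F3 X Y Z + F4 X Y Z)"
    proof (rule ex1I[where a = "(pr 1 \<xi> \<eta> F, pr 2 \<xi> \<eta> F, pr 3 \<xi> \<eta> F, pr 4 \<xi> \<eta> F)"])
      show "case (pr 1 \<xi> \<eta> F, pr 2 \<xi> \<eta> F, pr 3 \<xi> \<eta> F, pr 4 \<xi> \<eta> F) of (F1, F2, F3, F4) \<Rightarrow>
          F1 \<in> Wsp 1 \<phi> \<xi> \<eta> g \<and> F2 \<in> Wsp 2 \<phi> \<xi> \<eta> g \<and>
          F3 \<in> Wsp 3 \<phi> \<xi> \<eta> g \<and> F4 \<in> Wsp 4 \<phi> \<xi> \<eta> g \<and>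
          F = (\<lambda>X Y Z. F1 X Y Z + F2 X Y Z + F3 X Y Z + F4 X Y Z)"
        using decomp[OF F] F unfolding Wsp_def by auto
    next
      fix y assume y: "case y of (F1, F2, F3, F4) \<Rightarrow>
          F1 \<in> Wsp 1 \<phi> \<xi> \<eta> g \<and> F2 \<in> Wsp 2 \<phi> \<xi> \<eta> g \<and>
          F3 \<in> Wsp 3 \<phi> \<xi> \<eta> g \<and> F4 \<in> Wsp 4 \<phi> \<xi> \<eta> g \<and>
          F = (\<lambda>X Y Z. F1 X Y Z + F2 X Y Z + F3 X Y Z + F4 X Y Z)"
      obtain F1 F2 F3 F4 where yy: "y = (F1, F2, F3, F4)" by (cases y) auto
      show "y = (pr 1 \<xi> \<eta> F, pr 2 \<xi> \<eta> F, pr 3 \<xi> \<eta> F, pr 4 \<xi> \<eta> F)"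
        using y uniq[of F1 F2 F3 F4 F] unfolding yy by auto
    qed
  qed
  have P3: "\<forall>i\<in>{1..4}. \<forall>j\<in>{1..4}. i \<noteq> j \<longrightarrow>
          (\<forall>F\<in>Wsp i \<phi> \<xi> \<eta> g. \<forall>F'\<in>Wsp j \<phi> \<xi> \<eta> g. tinner g F F' = 0)"
    using orth by blast
  have P4: "\<forall>i\<in>{1..4}. \<forall>a\<in>grpG \<phi> \<xi> \<eta> g. \<forall>F\<in>Wsp i \<phi> \<xi> \<eta> g.
          gact a F \<in> Wsp i \<phi> \<xi> \<eta> g"
  proof (intro ballI)
    fix i a F assume i: "i \<in> {1..4::nat}" and a: "a \<in> grpG \<phi> \<xi> \<eta> g" and F: "F \<in> Wsp i \<phi> \<xi> \<eta> g"
    obtain G where G: "G \<in> calF \<phi> \<xi> \<eta> g" "F = pr i \<xi> \<eta> G" using F unfolding Wsp_def by blast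
    have "gact a F = pr i \<xi> \<eta> (gact a G)" using G(2) gact_pr[OF a i] by simp
    then show "gact a F \<in> Wsp i \<phi> \<xi> \<eta> g" unfolding Wsp_def using gact_calF[OF a G(1)] by blast
  qed
  show ?thesis using P1 P2 P3 P4 by blast
qed

end
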